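(* Fix integers $N\ge 2$ and $K\ge 1$. The class $M^{\text{RESCAL}}_{\lfloor N/32-1\rfloor}$ is not universal, i.e. $\pi(\mathcal{M}^{\text{RESCAL}}_{\lfloor N/32-1\rfloor})\ne\pi(\mathbb{R}^{N\times N\times K})$.
   Context: There are $N$ entities and $K$ relations. A score-based model assigns a score $s_k(i,j)\in\mathbb{R}$ to each triple, $i,j\in\{1,\dots,N\}$, $k\in\{1,\dots,K\}$; its scoring tensor $\mathcal{S}\in\mathbb{R}^{N\times N\times K}$ has frontal slices $\mathbf{S}_k$ with $[\mathbf{S}_k]_{ij}=s_k(i,j)$. For a real $N\times N$ matrix $\mathbf{S}$, $\pi(\mathbf{S})$ is the matrix of dense ranks: $\pi_{ij}(\mathbf{S})=1+$ (number of distinct values among entries of $\mathbf{S}$ strictly larger than $s_{ij}$). For tensors, $\pi$ acts slicewise; for a set $X$, $\pi(X)=\{\pi(x):x\in X\}$. RESCAL of size $r$: parameters $\mathbf{A}\in\mathbb{R}^{N\times r}$ (rows $\mathbf{a}_i$), $\mathbf{R}_1,\dots,\mathbf{R}_K\in\mathbb{R}^{r\times r}$, score $\mathbf{a}_i^T\mathbf{R}_k\mathbf{a}_j$; $\mathcal{M}^{\text{RESCAL}}_r$ is the set of scoring tensors of all such models. *)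

theory Defs
  imports Complex_Main
begin

text \<open>Tensors in R^{N x N x K} are represented as functions
  nat => nat => nat => real; only entries with i < N, j < N, k < K matter
  (entities are indexed 0..N-1, relations 0..K-1).\<close>

type_synonym tensor = "nat \<Rightarrow> nat \<Rightarrow> nat \<Rightarrow> real"

definition dense_rank :: "nat \<Rightarrow> (nat \<Rightarrow> nat \<Rightarrow> real) \<Rightarrow> nat \<Rightarrow> nat \<Rightarrow> nat" where
  "dense_rank N S i j =
     1 + card {v. (\<exists>i'<N. \<exists>j'<N. v = S i' j') \<and> v > S i j}"

definition rank_tensor :: "nat \<Rightarrow> nat \<Rightarrow> tensor \<Rightarrow> (nat \<Rightarrow> nat \<Rightarrow> nat \<Rightarrow> nat)" where
  "rank_tensor N K S =
     (\<lambda>i j k. if i < N \<and> j < N \<and> k < K then dense_rank N (\<lambda>a b. S a b k) i j else 0)"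

text \<open>Scoring tensors of RESCAL models of size r:
  s_k(i,j) = a_i^T R_k a_j, with A an N x r matrix and R_k r x r matrices.\<close>
definition rescal_score :: "nat \<Rightarrow> (nat \<Rightarrow> nat \<Rightarrow> real) \<Rightarrow> (nat \<Rightarrow> nat \<Rightarrow> nat \<Rightarrow> real) \<Rightarrow> tensor" where
  "rescal_score r A R = (\<lambda>i j k. \<Sum>a<r. \<Sum>b<r. A i a * R k a b * A j b)"

definition RESCAL_models :: "nat \<Rightarrow> tensor set" where
  "RESCAL_models r = {rescal_score r A R | A R. True}"

end

theory Submission
  imports Defs "Jordan_Normal_Form.Determinant"
begin

lemma key_lin:
  fixes U V :: "nat \<Rightarrow> nat \<Rightarrow> real" and c e :: real
  assumes rN: "r + 1 < N" and e: "e \<noteq> 0"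
    and h: "\<And>i j. i < N \<Longrightarrow> j < N \<Longrightarrow> (\<Sum>b<r. U i b * V j b) = c + (if i = j then e else 0)"
  shows False
proof -
  define X where "X = mat N N (\<lambda>(i,b). if b < r then U i b else if b = r then - c else 0)"
  define Y where "Y = mat N N (\<lambda>(b,j). if b < r then V j b else if b = r then 1 else (0::real))"
  have XC: "X \<in> carrier_mat N N" and YC: "Y \<in> carrier_mat N N" unfolding X_def Y_def by auto
  have "X * Y = e \<cdot>\<^sub>m 1\<^sub>m N"
  proof (rule eq_matI)
    fix i j assume i: "i < dim_row (e \<cdot>\<^sub>m 1\<^sub>m N)" and j: "j < dim_col (e \<cdot>\<^sub>m 1\<^sub>m N)"
    hence i: "i < N" and j: "j < N" by auto
    let ?f = "\<lambda>b. (if b < r then U i b else if b = r then - c else 0) *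
                   (if b < r then V j b else if b = r then 1 else (0::real))"
    have "(X * Y) $$ (i,j) = (\<Sum>b\<in>{0..<N}. ?f b)"
      using i j XC YC unfolding X_def Y_def
      by (auto simp: scalar_prod_def intro!: sum.cong)
    also have "\<dots> = (\<Sum>b\<in>{0..<r+1}. ?f b)"
      by (rule sum.mono_neutral_right) (use rN in auto)
    also have "\<dots> = (\<Sum>b<r. ?f b) + ?f r"
      by (simp add: atLeast0LessThan)
    also have "(\<Sum>b<r. ?f b) = (\<Sum>b<r. U i b * V j b)" by (rule sum.cong) auto
    also have "\<dots> + ?f r = (if i = j then e else 0)" using h[OF i j] by simp
    finally show "(X * Y) $$ (i,j) = (e \<cdot>\<^sub>m 1\<^sub>m N) $$ (i,j)" using i j by simp
  qed (use XC YC in auto)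
  hence "det (X * Y) = e ^ N" by simp
  moreover have "det X = 0"
  proof -
    have "X *\<^sub>v unit_vec N (r+1) = 0\<^sub>v N"
    proof (rule eq_vecI)
      fix i assume "i < dim_vec (0\<^sub>v N :: real vec)"
      hence i: "i < N" by simp
      have "(X *\<^sub>v unit_vec N (r+1)) $ i = 0"
        using i unfolding X_def by (auto simp: scalar_prod_def unit_vec_def intro!: sum.neutral)
      thus "(X *\<^sub>v unit_vec N (r+1)) $ i = (0\<^sub>v N :: real vec) $ i" using i by simp
    qed (simp add: X_def)
    moreover have "(unit_vec N (r+1) :: real vec) \<noteq> 0\<^sub>v N"
    proof
      assume "(unit_vec N (r+1) :: real vec) = 0\<^sub>v N"
      hence "(unit_vec N (r+1) :: real vec) $ (r+1) = 0\<^sub>v N $ (r+1)" by (rule arg_cong)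
      thus False using rN by simp
    qed
    ultimately show ?thesis using det_0_iff_vec_prod_zero_field[OF XC] using unit_vec_carrier by blast
  qed
  ultimately show False using det_mult[OF XC YC] e by simp
qed

lemma fin_vals: fixes N :: nat and S :: "nat \<Rightarrow> nat \<Rightarrow> real"
  shows "finite {v. (\<exists>i'<N. \<exists>j'<N. v = S i' j') \<and> P v}"
proof -
  have "{v. (\<exists>i'<N. \<exists>j'<N. v = S i' j') \<and> P v} \<subseteq> (\<lambda>(a,b). S a b) ` ({..<N} \<times> {..<N})"
    by auto
  moreover have "finite ((\<lambda>(a,b). S a b) ` ({..<N} \<times> {..<N}))" by (intro finite_imageI) simp
  ultimately show ?thesis by (rule finite_subset)
qed

lemma dr1: assumes "dense_rank N S i j = 1" "i' < N" "j' < N"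
  shows "S i' j' \<le> S i j"
proof (rule ccontr)
  assume "\<not> ?thesis"
  hence lt: "S i j < S i' j'" by simp
  have "{v. (\<exists>i'<N. \<exists>j'<N. v = S i' j') \<and> v > S i j} \<noteq> {}" using assms lt by blast
  hence "card {v. (\<exists>i'<N. \<exists>j'<N. v = S i' j') \<and> v > S i j} \<noteq> 0"
    using fin_vals[of N S "\<lambda>v. v > S i j"] by simp
  thus False using assms(1) unfolding dense_rank_def by linarith
qed

lemma dr2: assumes "dense_rank N S i j = 2" "i' < N" "j' < N" "i2 < N" "j2 < N"
  "S i j < S i' j'" "S i j < S i2 j2" "S i' j' < S i2 j2"
  shows False
proof -
  have "{S i' j', S i2 j2} \<subseteq> {v. (\<exists>i'<N. \<exists>j'<N. v = S i' j') \<and> v > S i j}" using assms by auto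
  hence "card {S i' j', S i2 j2} \<le> card {v. (\<exists>i'<N. \<exists>j'<N. v = S i' j') \<and> v > S i j}"
    using fin_vals[of N S "\<lambda>v. v > S i j"] by (rule card_mono[rotated])
  moreover have "card {S i' j', S i2 j2} = 2" using assms(8) by simp
  ultimately show False using assms(1) unfolding dense_rank_def by linarith
qed

lemma T0_rank:
  assumes "i < N" "j < N" "N \<ge> 2"
  shows "dense_rank N (\<lambda>a b. if a = b then 1 else 0) i j = (if i = j then 1 else 2)"
proof (cases "i = j")
  case True
  thus ?thesis unfolding dense_rank_def by auto
next
  case False
  have "{v. (\<exists>i'<N. \<exists>j'<N. v = (if i' = j' then 1 else (0::real))) \<and> v > (if i = j then 1 else 0)} = {1}"
    using False assms by auto
  thus ?thesis using False unfolding dense_rank_def by simp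
qed

theorem theorem6:
  fixes N K :: nat
  assumes "N \<ge> 2" and "K \<ge> 1"
  shows "rank_tensor N K ` RESCAL_models (nat \<lfloor>real N / 32 - 1\<rfloor>)
         \<noteq> rank_tensor N K ` (UNIV :: tensor set)"
proof
  define r where "r = nat \<lfloor>real N / 32 - 1\<rfloor>"
  have rN: "r + 1 < N"
  proof (cases "\<lfloor>real N / 32 - 1\<rfloor> \<le> 0")
    case True thus ?thesis using assms unfolding r_def by auto
  next
    case False
    hence "real r = of_int \<lfloor>real N / 32 - 1\<rfloor>" unfolding r_def by simp
    also have "\<dots> \<le> real N / 32 - 1" by linarith
    finally have "real r + 1 < real N" using assms by linarith
    thus ?thesis by linarith
  qed
  define T0 :: tensor where "T0 = (\<lambda>i j k. if i = j then 1 else 0)"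
  assume eq: "rank_tensor N K ` RESCAL_models (nat \<lfloor>real N / 32 - 1\<rfloor>)
         = rank_tensor N K ` (UNIV :: tensor set)"
  have "rank_tensor N K T0 \<in> rank_tensor N K ` RESCAL_models r" using eq unfolding r_def by auto
  then obtain A R where E: "rank_tensor N K (rescal_score r A R) = rank_tensor N K T0"
    unfolding RESCAL_models_def by auto
  define S where "S = (\<lambda>i j. rescal_score r A R i j 0)"
  have dS: "dense_rank N S i j = (if i = j then 1 else 2)" if "i < N" "j < N" for i j
  proof -
    have "rank_tensor N K (rescal_score r A R) i j 0 = rank_tensor N K T0 i j 0" using E by simp
    thus ?thesis using that assms T0_rank[OF that assms(1)]
      unfolding rank_tensor_def S_def T0_def by simp
  qed
  have N0: "0 < N" "1 < N" using assms by auto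
  have d00: "dense_rank N S 0 0 = 1" using dS[OF N0(1) N0(1)] by simp
  have diag: "S i i = S 0 0" if "i < N" for i
  proof -
    have "dense_rank N S i i = 1" using dS[OF that that] by simp
    from dr1[OF this N0(1) N0(1)] dr1[OF d00 that that] show ?thesis by linarith
  qed
  have lt: "S i j < S 0 0" if "i < N" "j < N" "i \<noteq> j" for i j
  proof -
    have "S 0 0 \<le> S i j \<Longrightarrow> S 0 0 = S i j"
      using dr1[OF d00 that(1,2)] by simp
    moreover have "S i j \<noteq> S 0 0"
    proof
      assume h: "S i j = S 0 0"
      have "dense_rank N S i j = dense_rank N S 0 0" unfolding dense_rank_def h ..
      thus False using dS[OF that(1,2)] dS[OF N0(1) N0(1)] that by simp
    qed
    ultimately show ?thesis by linarith
  qed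
  have off: "S i j = S 1 0" if "i < N" "j < N" "i \<noteq> j" for i j
  proof -
    have d2: "dense_rank N S i j = 2" "dense_rank N S 1 0 = 2" using dS that N0 by auto
    have l1: "S i j < S 0 0" "S 1 0 < S 0 0" using lt that N0 by auto
    show ?thesis
    proof (rule ccontr)
      assume "S i j \<noteq> S 1 0"
      hence "S i j < S 1 0 \<or> S 1 0 < S i j" by linarith
      thus False
      proof
        assume "S i j < S 1 0"
        thus False using dr2[OF d2(1) N0(2) N0(1) N0(1) N0(1)] l1 by simp
      next
        assume "S 1 0 < S i j"
        thus False using dr2[OF d2(2) that(1,2) N0(1) N0(1)] l1 by simp
      qed
    qed
  qed
  define U where "U = (\<lambda>i b. \<Sum>a<r. A i a * R 0 a b)"
  have Sform: "S i j = (\<Sum>b<r. U i b * A j b)" for i j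
    unfolding S_def rescal_score_def U_def
    by (subst sum.swap) (simp add: sum_distrib_right)
  show False
  proof (rule key_lin[OF rN, of "S 0 0 - S 1 0" U A "S 1 0"])
    show "S 0 0 - S 1 0 \<noteq> 0" using lt[of 1 0] N0 by simp
  next
    fix i j assume "i < N" "j < N"
    show "(\<Sum>b<r. U i b * A j b) = S 1 0 + (if i = j then S 0 0 - S 1 0 else 0)"
    proof (cases "i = j")
      case True thus ?thesis using diag[OF \<open>i < N\<close>] unfolding Sform[symmetric] by simp
    next
      case False thus ?thesis using off[OF \<open>i < N\<close> \<open>j < N\<close> False] unfolding Sform[symmetric] by simp
    qed
  qed
qed

end
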